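(* Let $\alpha>0$ and $\hbar>0$ be constants, let $\tilde g:\mathbb{R}\setminus\{0\}\to\mathbb{R}$ be continuously differentiable, and let $\psi:\mathbb{R}\to\mathbb{R}$ be a nonzero real-valued square-integrable function, continuously differentiable on $\mathbb{R}\setminus\{0\}$, such that the quantities $$\mathcal{A}=4\pi\int_{\mathbb{R}}dp\,\frac{\psi(p)^{2}}{p^{4}},\qquad \mathcal{B}=8\pi\int_{\mathbb{R}}dp\,\frac{d\tilde g(p)}{dp}\,\frac{\psi(p)^{2}}{p^{2}},\qquad \mathcal{C}=4\pi\int_{\mathbb{R}}dp\,\left\{\hbar^{2}\left[\frac{d\psi(p)}{dp}\right]^{2}+\left[\frac{d\tilde g(p)}{dp}\right]^{2}\psi(p)^{2}\right\}$$ are finite. Then $\mathcal{B}^{2}<4\mathcal{A}\mathcal{C}$. Consequently the quadratic function $\tau\mapsto \mathcal{A}(\alpha^{2}\tau)^{2}+\mathcal{B}(\alpha^{2}\tau)+\mathcal{C}$ has a strictly positive minimum over $\tau\in\mathbb{R}$.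
   Context: The quadratic $\mathcal{A}(\alpha^{2}\tau)^{2}+\mathcal{B}(\alpha^{2}\tau)+\mathcal{C}$ equals, for real $\psi$, the function $4\pi\int_{\mathbb{R}}dp\,\left|\left(\tilde g'(p)+\alpha^{2}\tau/p^{2}\right)\psi(p)-i\hbar\psi'(p)\right|^{2}$, the expectation value of the gauge-invariant area of 2-spheres at relational time $\tau$ for an arbitrary clock choice encoded by $\tilde g$. *)

theory Defs
  imports "HOL-Analysis.Analysis"
begin

text \<open>The coefficients A, B, C of the quadratic (Lebesgue integrals over the real line).
  Values at p = 0 are irrelevant (a null set); division by zero is 0 in Isabelle.\<close>

definition coefA :: "(real \<Rightarrow> real) \<Rightarrow> real" where
  "coefA \<psi> = 4 * pi * (LINT p|lborel. (\<psi> p)\<^sup>2 / p ^ 4)"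

definition coefB :: "(real \<Rightarrow> real) \<Rightarrow> (real \<Rightarrow> real) \<Rightarrow> real" where
  "coefB g \<psi> = 8 * pi * (LINT p|lborel. deriv g p * (\<psi> p)\<^sup>2 / p\<^sup>2)"

definition coefC :: "real \<Rightarrow> (real \<Rightarrow> real) \<Rightarrow> (real \<Rightarrow> real) \<Rightarrow> real" where
  "coefC hbar g \<psi> = 4 * pi * (LINT p|lborel. hbar\<^sup>2 * (deriv \<psi> p)\<^sup>2 + (deriv g p)\<^sup>2 * (\<psi> p)\<^sup>2)"

end

theory Submission
  imports Defs "HOL-Analysis.Analysis"
begin

lemma inf_meas: fixes S :: "real set"
  assumes "S \<in> sets borel" "\<And>r. r \<ge> 0 \<Longrightarrow> ennreal r \<le> emeasure lborel S"
  shows "emeasure lborel S = \<infinity>"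
proof (rule ccontr)
  assume "emeasure lborel S \<noteq> \<infinity>"
  then obtain r where r: "emeasure lborel S = ennreal r" "r \<ge> 0"
    by (cases "emeasure lborel S" rule: ennreal_cases) auto
  have "ennreal (r + 1) \<le> ennreal r" using assms(2)[of "r+1"] r by simp
  thus False using r(2) by (simp add: ennreal_le_iff)
qed
lemma inf_Ioi: "emeasure lborel {0::real<..} = \<infinity>"
proof (rule inf_meas)
  fix r :: real assume "r \<ge> 0"
  have "ennreal r = emeasure lborel {0<..<r::real}" using \<open>r \<ge> 0\<close> by simp
  also have "\<dots> \<le> emeasure lborel {0::real<..}" by (rule emeasure_mono) auto
  finally show "ennreal r \<le> emeasure lborel {0::real<..}" .
qed auto
lemma inf_Iio: "emeasure lborel {..<0::real} = \<infinity>"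
proof (rule inf_meas)
  fix r :: real assume "r \<ge> 0"
  have "ennreal r = emeasure lborel {-r<..<0::real}" using \<open>r \<ge> 0\<close> by simp
  also have "\<dots> \<le> emeasure lborel {..<0::real}" by (rule emeasure_mono) auto
  finally show "ennreal r \<le> emeasure lborel {..<0::real}" .
qed auto

lemma const_zero_aux:
  fixes \<psi> :: "real \<Rightarrow> real" and S :: "real set"
  assumes "integrable lborel (\<lambda>p. (\<psi> p)\<^sup>2)" "S \<in> sets borel"
    "emeasure lborel S = \<infinity>" "\<forall>x\<in>S. \<psi> x = c"
  shows "c = 0"
proof (rule ccontr)
  assume c: "c \<noteq> 0"
  have "integrable lborel (\<lambda>p. (\<psi> p)\<^sup>2 * indicator S p)"
    using assms(1,2) by (intro integrable_real_mult_indicator) auto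
  also have "(\<lambda>p. (\<psi> p)\<^sup>2 * indicator S p) = (\<lambda>p. c\<^sup>2 * indicator S p)"
    using assms(4) by (auto simp: indicator_def)
  finally have "integrable lborel (indicator S :: real \<Rightarrow> real)"
    using c by simp
  thus False using assms(3) by (simp add: integrable_indicator_iff)
qed

lemma deriv_not_AE_zero:
  fixes \<psi> :: "real \<Rightarrow> real"
  assumes C1: "\<psi> C1_differentiable_on (- {0})"
    and int: "integrable lborel (\<lambda>p. (\<psi> p)\<^sup>2)"
    and nz: "\<not> (AE p in lborel. \<psi> p = 0)"
  shows "\<not> (AE p in lborel. deriv \<psi> p = 0)"
proof
  assume AE0: "AE p in lborel. deriv \<psi> p = 0"
  from C1 obtain D where D: "\<forall>x\<in>- {0}. (\<psi> has_vector_derivative D x) (at x)"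
    and Dc: "continuous_on (- {0}) D"
    unfolding C1_differentiable_on_def by blast
  have Dd: "(\<psi> has_field_derivative D x) (at x)" if "x \<noteq> 0" for x
    using D that by (simp add: has_real_derivative_iff_has_vector_derivative)
  have dd: "deriv \<psi> x = D x" if "x \<noteq> 0" for x
    using Dd[OF that] by (rule DERIV_imp_deriv)
  have Dz: "D x = 0" if x: "x \<noteq> 0" for x
  proof (rule ccontr)
    assume Dx: "D x \<noteq> 0"
    define U where "U = - {0} \<inter> D -` (- {0})"
    have "open U" unfolding U_def
      by (rule continuous_open_preimage[OF Dc]) auto
    moreover have "x \<in> U" using x Dx by (auto simp: U_def)
    ultimately obtain e where e: "e > 0" "ball x e \<subseteq> U"
      by (rule openE)
    from AE0 obtain N where N0: "{p \<in> space lborel. \<not> deriv \<psi> p = 0} \<subseteq> N"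
      "emeasure lborel N = 0" "N \<in> sets lborel"
      by (rule AE_E)
    have N: "N \<in> sets lborel" "{p. deriv \<psi> p \<noteq> 0} \<subseteq> N" using N0 by auto
    have "ball x e \<subseteq> N"
    proof
      fix y assume "y \<in> ball x e"
      hence "y \<in> U" using e(2) by blast
      hence "y \<noteq> 0" "D y \<noteq> 0" by (auto simp: U_def)
      hence "deriv \<psi> y \<noteq> 0" using dd by metis
      thus "y \<in> N" using N(2) by blast
    qed
    moreover have "ball x e = {x - e <..< x + e}"
      by (rule ball_eq_greaterThanLessThan)
    ultimately have "{x - e <..< x + e} \<subseteq> N" by simp
    hence "emeasure lborel {x - e <..< x + e} \<le> emeasure lborel N"
      using N(1) by (intro emeasure_mono) auto
    moreover have "emeasure lborel {x - e <..< x + e} = ennreal (2 * e)"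
      using e(1) by simp
    moreover have "emeasure lborel N = 0" using N0(2) .
    ultimately have "ennreal (2 * e) \<le> 0" by metis
    thus False using e(1) by simp
  qed
  have "\<exists>c. \<forall>x\<in>{0<..}. \<psi> x = c"
  proof (rule has_field_derivative_zero_constant)
    fix x :: real assume "x \<in> {0<..}"
    hence "x \<noteq> 0" by auto
    thus "(\<psi> has_field_derivative 0) (at x within {0<..})"
      using Dd Dz by (metis has_field_derivative_at_within)
  qed auto
  then obtain c1 where c1: "\<forall>x\<in>{0<..}. \<psi> x = c1" by blast
  have "\<exists>c. \<forall>x\<in>{..<0}. \<psi> x = c"
  proof (rule has_field_derivative_zero_constant)
    fix x :: real assume "x \<in> {..<0}"
    hence "x \<noteq> 0" by auto
    thus "(\<psi> has_field_derivative 0) (at x within {..<0})"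
      using Dd Dz by (metis has_field_derivative_at_within)
  qed auto
  then obtain c2 where c2: "\<forall>x\<in>{..<0}. \<psi> x = c2" by blast
  have "c1 = 0" using const_zero_aux[OF int _ inf_Ioi c1] by simp
  have "c2 = 0" using const_zero_aux[OF int _ inf_Iio c2] by simp
  have "AE p in lborel. \<psi> p = 0"
    using AE_lborel_singleton[of 0]
  proof (rule AE_mp, intro AE_I2 impI)
    fix p :: real assume "p \<noteq> 0"
    thus "\<psi> p = 0" using c1 c2 \<open>c1 = 0\<close> \<open>c2 = 0\<close>
      by (cases "p > 0") auto
  qed
  with nz show False by simp
qed


lemma quad_min:
  fixes a b c :: real
  assumes a: "a > 0"
  shows "a * s\<^sup>2 + b * s + c = a * (s + b / (2 * a))\<^sup>2 + (c - b\<^sup>2 / (4 * a))"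
  using a by (simp add: field_simps power2_eq_square)

theorem mainTheorem2:
  fixes \<alpha> hbar :: real and g \<psi> :: "real \<Rightarrow> real"
  assumes "\<alpha> > 0" and "hbar > 0"
    and "g C1_differentiable_on (- {0})"
    and "\<psi> C1_differentiable_on (- {0})"
    and "\<psi> \<in> borel_measurable lborel"
    and "integrable lborel (\<lambda>p. (\<psi> p)\<^sup>2)"
    and "\<not> (AE p in lborel. \<psi> p = 0)"
    and "integrable lborel (\<lambda>p. (\<psi> p)\<^sup>2 / p ^ 4)"
    and "integrable lborel (\<lambda>p. deriv g p * (\<psi> p)\<^sup>2 / p\<^sup>2)"
    and "integrable lborel (\<lambda>p. hbar\<^sup>2 * (deriv \<psi> p)\<^sup>2 + (deriv g p)\<^sup>2 * (\<psi> p)\<^sup>2)"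
  shows "(coefB g \<psi>)\<^sup>2 < 4 * coefA \<psi> * coefC hbar g \<psi>
     \<and> (\<exists>\<tau>0::real.
          (\<forall>\<tau>::real. coefA \<psi> * (\<alpha>\<^sup>2 * \<tau>0)\<^sup>2 + coefB g \<psi> * (\<alpha>\<^sup>2 * \<tau>0) + coefC hbar g \<psi>
                  \<le> coefA \<psi> * (\<alpha>\<^sup>2 * \<tau>)\<^sup>2 + coefB g \<psi> * (\<alpha>\<^sup>2 * \<tau>) + coefC hbar g \<psi>)
        \<and> coefA \<psi> * (\<alpha>\<^sup>2 * \<tau>0)\<^sup>2 + coefB g \<psi> * (\<alpha>\<^sup>2 * \<tau>0) + coefC hbar g \<psi> > 0)"
proof -
  define fA where "fA = (\<lambda>p::real. (\<psi> p)\<^sup>2 / p ^ 4)"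
  define fB where "fB = (\<lambda>p::real. deriv g p * (\<psi> p)\<^sup>2 / p\<^sup>2)"
  define fC where "fC = (\<lambda>p::real. hbar\<^sup>2 * (deriv \<psi> p)\<^sup>2 + (deriv g p)\<^sup>2 * (\<psi> p)\<^sup>2)"
  define F where "F = (\<lambda>s p::real. (deriv g p + s / p\<^sup>2)\<^sup>2 * (\<psi> p)\<^sup>2 + hbar\<^sup>2 * (deriv \<psi> p)\<^sup>2)"
  have iA: "integrable lborel fA" and iB: "integrable lborel fB" and iC: "integrable lborel fC"
    using assms(8,9,10) by (simp_all add: fA_def fB_def fC_def)
  have pt: "s\<^sup>2 * fA p + 2 * s * fB p + fC p = F s p" for s p :: real
  proof (cases "p = 0")
    case True thus ?thesis by (simp add: fA_def fB_def fC_def F_def)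
  next
    case False
    have p4: "p ^ 4 = p * (p * (p * p))" by (simp add: numeral_eq_Suc)
    from False show ?thesis
      by (simp add: fA_def fB_def fC_def F_def field_simps power2_eq_square p4)
  qed
  have Fint: "integrable lborel (F s)" for s
  proof -
    have "integrable lborel (\<lambda>p. s\<^sup>2 * fA p + 2 * s * fB p + fC p)"
      using iA iB iC by (intro Bochner_Integration.integrable_add) auto
    thus ?thesis using pt by simp
  qed
  have Feq: "(LINT p|lborel. F s p) = s\<^sup>2 * (LINT p|lborel. fA p) + 2 * s * (LINT p|lborel. fB p) + (LINT p|lborel. fC p)" for s
  proof -
    have "(LINT p|lborel. F s p) = (LINT p|lborel. s\<^sup>2 * fA p + 2 * s * fB p + fC p)"
      using pt by simp
    also have "\<dots> = s\<^sup>2 * (LINT p|lborel. fA p) + 2 * s * (LINT p|lborel. fB p) + (LINT p|lborel. fC p)"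
      using iA iB iC by (simp add: Bochner_Integration.integral_add)
    finally show ?thesis .
  qed
  have ndA: "\<not> (AE p in lborel. deriv \<psi> p = 0)"
    by (rule deriv_not_AE_zero[OF assms(4) assms(6) assms(7)])
  have Fpos: "(LINT p|lborel. F s p) > 0" for s
  proof -
    have nn: "F s p \<ge> 0" for p by (simp add: F_def)
    have "(LINT p|lborel. F s p) \<ge> 0" using nn by (simp add: integral_nonneg)
    moreover have "(LINT p|lborel. F s p) \<noteq> 0"
    proof
      assume "(LINT p|lborel. F s p) = 0"
      hence "AE p in lborel. F s p = 0"
        using integral_nonneg_eq_0_iff_AE[OF Fint] nn by simp
      hence "AE p in lborel. deriv \<psi> p = 0"
      proof (rule AE_mp, intro AE_I2 impI)
        fix p assume "F s p = 0"
        moreover have "(deriv g p + s / p\<^sup>2)\<^sup>2 * (\<psi> p)\<^sup>2 \<ge> 0" by simp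
        ultimately have "hbar\<^sup>2 * (deriv \<psi> p)\<^sup>2 \<le> 0" unfolding F_def by linarith
        thus "deriv \<psi> p = 0" using assms(2)
          by (metis mult_pos_pos not_less power2_less_eq_zero_iff zero_less_power2 less_irrefl)
      qed
      with ndA show False by simp
    qed
    ultimately show ?thesis by simp
  qed
  have IApos: "(LINT p|lborel. fA p) > 0"
  proof -
    have nn: "fA p \<ge> 0" for p by (simp add: fA_def)
    have "(LINT p|lborel. fA p) \<ge> 0" using nn by (simp add: integral_nonneg)
    moreover have "(LINT p|lborel. fA p) \<noteq> 0"
    proof
      assume "(LINT p|lborel. fA p) = 0"
      hence "AE p in lborel. fA p = 0"
        using integral_nonneg_eq_0_iff_AE[OF iA] nn by simp
      hence "AE p in lborel. \<psi> p = 0"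
        using AE_lborel_singleton[of 0]
      proof (rule AE_mp[OF AE_conjI], intro AE_I2 impI)
        fix p :: real assume "fA p = 0 \<and> p \<noteq> 0"
        thus "\<psi> p = 0" by (auto simp: fA_def)
      qed
      with assms(7) show False by simp
    qed
    ultimately show ?thesis by simp
  qed
  define a where "a = coefA \<psi>"
  define b where "b = coefB g \<psi>"
  define c where "c = coefC hbar g \<psi>"
  have a_def': "a = 4 * pi * (LINT p|lborel. fA p)" by (simp add: a_def coefA_def fA_def)
  have b_def': "b = 4 * pi * (2 * (LINT p|lborel. fB p))" by (simp add: b_def coefB_def fB_def)
  have c_def': "c = 4 * pi * (LINT p|lborel. fC p)" by (simp add: c_def coefC_def fC_def)
  have q: "a * s\<^sup>2 + b * s + c = 4 * pi * (LINT p|lborel. F s p)" for s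
    unfolding a_def' b_def' c_def' Feq by (simp add: algebra_simps)
  have qpos: "a * s\<^sup>2 + b * s + c > 0" for s
    unfolding q using Fpos[of s] by simp
  have apos: "a > 0" unfolding a_def' using IApos by simp
  have v: "c - b\<^sup>2 / (4 * a) > 0"
    using qpos[of "- b / (2 * a)"] quad_min[OF apos, of "- b / (2 * a)" b c] by simp
  hence disc: "b\<^sup>2 < 4 * a * c"
    using apos by (simp add: field_simps)
  define \<tau>0 where "\<tau>0 = - b / (2 * a) / \<alpha>\<^sup>2"
  have t0: "\<alpha>\<^sup>2 * \<tau>0 = - b / (2 * a)" using assms(1) by (simp add: \<tau>0_def)
  have mn: "a * (\<alpha>\<^sup>2 * \<tau>0)\<^sup>2 + b * (\<alpha>\<^sup>2 * \<tau>0) + c \<le> a * (\<alpha>\<^sup>2 * \<tau>)\<^sup>2 + b * (\<alpha>\<^sup>2 * \<tau>) + c" for \<tau>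
  proof -
    have "a * (\<alpha>\<^sup>2 * \<tau>0)\<^sup>2 + b * (\<alpha>\<^sup>2 * \<tau>0) + c = c - b\<^sup>2 / (4 * a)"
      unfolding t0 using quad_min[OF apos, of "- b / (2 * a)" b c] by simp
    also have "\<dots> \<le> a * (\<alpha>\<^sup>2 * \<tau>)\<^sup>2 + b * (\<alpha>\<^sup>2 * \<tau>) + c"
      unfolding quad_min[OF apos, of "\<alpha>\<^sup>2 * \<tau>" b c] using apos by simp
    finally show ?thesis .
  qed
  show ?thesis
    unfolding a_def[symmetric] b_def[symmetric] c_def[symmetric]
    using disc mn qpos by blast
qed

end
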